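(* Let $p\ge 3$ be a prime and let $G$ be the Tanner graph of the array-based LDPC parity-check matrix $\mathbf{H}(3,p)$. Let $C_u$ be a set of $z$ check nodes with $1\le z\le p$, and let $W$ be the cluster-connecting set corresponding to $C_u$. Then: (a) $|W|\ge \dfrac{(1+2p)z-z^2}{4}$; (b) if all check nodes in $C_u$ belong to the same row group of $\mathbf{H}(3,p)$, then $|W|=zp$; (c) if $3\le z<p$ and every check node $c\in C_u$ lies on at least one cycle of length $6$ in $G$ whose other two check nodes also belong to $C_u$, then $|W|\le zp-z$.
   Context: For a prime $p$, let $\mathbf{I}$ be the $p\times p$ identity matrix and let $\sigma^{s}$ denote the $p\times p$ circulant permutation matrix obtained by cyclically left-shifting the entries of $\mathbf{I}$ by $s \pmod p$ positions ($\sigma^0=\mathbf{I}$). The array-based LDPC matrix $\mathbf{H}(3,p)$ is the $3p\times p^2$ binary block matrix whose $(r,t)$ block, $r\in\{0,1,2\}$, $t\in\{0,\dots,p-1\}$, is $\sigma^{rt}$. Its $r$-th block row (the $p$ rows of blocks $\sigma^{r\cdot 0},\dots,\sigma^{r(p-1)}$) is called row group $r$. Its Tanner graph $G=(V\cup C,E)$ is the bipartite graph with a variable node for each column, a check node for each row, and an edge for each entry equal to $1$. For $C_u\subseteq C$ let $\bar C_u=C\setminus C_u$, let $\mathcal{N}_V(C_u)$ be the set of variable nodes adjacent to some node of $C_u$, and for a variable node $x$ and $D\subseteq C$ let $\mathcal{N}_D(x)$ be the set of neighbors of $x$ in $D$. The cluster-connecting set (CCS) corresponding to $C_u$ is the set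 $W\subseteq \mathcal{N}_V(C_u)$ defined by: $x\in W$ if and only if $\mathcal{N}_{C_u}(x)\neq\emptyset$ and $\mathcal{N}_{\bar C_u}(x)\neq\emptyset$. *)

theory Defs
  imports Complex_Main "HOL-Computational_Algebra.Primes"
begin

text \<open>Check node (r,i): row i (0 \<le> i < p) of row group r (0 \<le> r < 3).
  Variable node (t,j): column j (0 \<le> j < p) of column block t (0 \<le> t < p).
  Block (r,t) is sigma^(r t), the identity cyclically left-shifted by r t positions:
  row i of sigma^s has its 1 in column (i - s) mod p, i.e. entry (i,j) is 1 iff (j + s) mod p = i.\<close>

definition checks :: "nat \<Rightarrow> (nat \<times> nat) set" where
  "checks p = {(r, i). r < 3 \<and> i < p}"

definition vars :: "nat \<Rightarrow> (nat \<times> nat) set" where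
  "vars p = {(t, j). t < p \<and> j < p}"

definition adj :: "nat \<Rightarrow> nat \<times> nat \<Rightarrow> nat \<times> nat \<Rightarrow> bool" where
  "adj p c x = (c \<in> checks p \<and> x \<in> vars p \<and> (snd x + fst c * fst x) mod p = snd c)"

definition NV :: "nat \<Rightarrow> (nat \<times> nat) set \<Rightarrow> (nat \<times> nat) set" where
  "NV p Cu = {x \<in> vars p. \<exists>c \<in> Cu. adj p c x}"

definition ND :: "nat \<Rightarrow> (nat \<times> nat) set \<Rightarrow> nat \<times> nat \<Rightarrow> (nat \<times> nat) set" where
  "ND p D x = {c \<in> D. adj p c x}"

definition CCS :: "nat \<Rightarrow> (nat \<times> nat) set \<Rightarrow> (nat \<times> nat) set" where
  "CCS p Cu = {x \<in> NV p Cu. ND p Cu x \<noteq> {} \<and> ND p (checks p - Cu) x \<noteq> {}}"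

definition cycle6 :: "nat \<Rightarrow> nat \<times> nat \<Rightarrow> nat \<times> nat \<Rightarrow> nat \<times> nat \<Rightarrow> bool" where
  "cycle6 p c1 c2 c3 = (c1 \<noteq> c2 \<and> c2 \<noteq> c3 \<and> c1 \<noteq> c3 \<and>
     (\<exists>v1 v2 v3. v1 \<noteq> v2 \<and> v2 \<noteq> v3 \<and> v1 \<noteq> v3 \<and>
        adj p c1 v1 \<and> adj p c2 v1 \<and> adj p c2 v2 \<and> adj p c3 v2 \<and>
        adj p c3 v3 \<and> adj p c1 v3))"

end

theory Submission
  imports Defs
begin

lemma small_dvd_zero:
  fixes d :: int
  assumes "int p dvd d" "\<bar>d\<bar> < int p" shows "d = 0"
proof (rule ccontr)
  assume "d \<noteq> 0"
  then have "\<bar>int p\<bar> \<le> \<bar>d\<bar>" by (rule dvd_imp_le_int[OF _ assms(1)])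
  with assms(2) show False by simp
qed

lemma key_inj:
  fixes p r r' t t' j j' :: nat
  assumes "prime p" "p \<ge> 3" "r < 3" "r' < 3" "r \<noteq> r'" "t < p" "t' < p" "j < p" "j' < p"
   "(j + r*t) mod p = (j' + r*t') mod p" "(j + r'*t) mod p = (j' + r'*t') mod p"
  shows "t = t' \<and> j = j'"
proof -
  have "int ((j + r*t) mod p) = int ((j' + r*t') mod p)" using assms(10) by (simp only:)
  then have "int (j + r*t) mod int p = int (j' + r*t') mod int p" by (simp only: of_nat_mod)
  then have d1: "int p dvd int (j + r*t) - int (j'+r*t')" by (simp only: mod_eq_dvd_iff)
  have "int ((j + r'*t) mod p) = int ((j' + r'*t') mod p)" using assms(11) by (simp only:)
  then have "int (j + r'*t) mod int p = int (j' + r'*t') mod int p" by (simp only: of_nat_mod)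
  then have d2: "int p dvd int (j + r'*t) - int (j'+r'*t')" by (simp only: mod_eq_dvd_iff)
  have e: "(int r - int r') * (int t - int t') = (int (j + r*t) - int (j'+r*t')) - (int (j + r'*t) - int (j'+r'*t'))"
    by (simp add: algebra_simps)
  have d: "int p dvd (int r - int r') * (int t - int t')" unfolding e using d1 d2 by (rule dvd_diff)
  have pr: "prime (int p)" using assms(1) by simp
  have "\<not> int p dvd (int r - int r')"
  proof
    assume "int p dvd (int r - int r')"
    moreover have "\<bar>int r - int r'\<bar> < int p" using assms(2-4) by linarith
    ultimately have "int r - int r' = 0" by (rule small_dvd_zero)
    with assms(5) show False by simp
  qed
  moreover have "int p dvd (int r - int r') \<or> int p dvd (int t - int t')" by (rule prime_dvd_multD[OF pr d])
  ultimately have "int p dvd (int t - int t')" by simp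
  moreover have "\<bar>int t - int t'\<bar> < int p" using assms(6,7) by linarith
  ultimately have "int t - int t' = 0" by (rule small_dvd_zero)
  then have tt: "t = t'" by simp
  have eqj: "int (j + r*t) - int (j'+r*t') = int j - int j'" using tt by simp
  have "int p dvd int j - int j'" using d1 unfolding eqj .
  moreover have "\<bar>int j - int j'\<bar> < int p" using assms(8,9) by linarith
  ultimately have "int j - int j' = 0" by (rule small_dvd_zero)
  then have "j = j'" by simp
  with tt show ?thesis by simp
qed

lemma key_inj1:
  fixes p r t j j' :: nat
  assumes "j < p" "j' < p" "(j + r*t) mod p = (j' + r*t) mod p"
  shows "j = j'"
proof -
  have "int ((j + r*t) mod p) = int ((j' + r*t) mod p)" using assms(3) by (simp only:)
  then have "int (j + r*t) mod int p = int (j' + r*t) mod int p" by (simp only: of_nat_mod)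
  then have "int p dvd int (j + r*t) - int (j'+r*t)" by (simp only: mod_eq_dvd_iff)
  then have "int p dvd int j - int j'" by simp
  moreover have "\<bar>int j - int j'\<bar> < int p" using assms(1,2) by linarith
  ultimately have "int j - int j' = 0" by (rule small_dvd_zero)
  then show "j = j'" by simp
qed

lemma card_pre:
  assumes "bij_betw f A B"
  shows "card {x\<in>A. P (f x)} = card {y\<in>B. P y}"
proof -
  have i: "inj_on f {x\<in>A. P (f x)}"
    by (rule inj_on_subset[OF bij_betw_imp_inj_on[OF assms]]) blast
  have "f ` A = B" by (rule bij_betw_imp_surj_on[OF assms])
  then have "f ` {x\<in>A. P (f x)} = {y\<in>B. P y}" by blast
  then show ?thesis using card_image[OF i] by simp
qed

lemma vars_eq: "vars p = {..<p} \<times> {..<p}" by (auto simp: vars_def)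
lemma checks_eq: "checks p = {..<3} \<times> {..<p}" by (auto simp: checks_def)
lemma fin_vars[simp]: "finite (vars p)" by (simp add: vars_eq)
lemma fin_checks[simp]: "finite (checks p)" by (simp add: checks_eq)

lemma endo_bij:
  assumes "finite A" "f ` A \<subseteq> A" "inj_on f A" shows "bij_betw f A A"
  using assms endo_inj_surj unfolding bij_betw_def by blast

lemma nbrs_card:
  assumes "p > 0" "c \<in> checks p"
  shows "card {x\<in>vars p. adj p c x} = p"
proof -
  obtain r i where c: "c = (r,i)" by force
  define f where "f = (\<lambda>x::nat\<times>nat. (fst x, (snd x + r * fst x) mod p))"
  have "inj_on f (vars p)"
  proof (rule inj_onI)
    fix x y assume xy: "x \<in> vars p" "y \<in> vars p" "f x = f y"
    obtain t j where x: "x = (t,j)" by force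
    obtain t' j' where y: "y = (t',j')" by force
    have tt: "t = t'" using xy(3) unfolding x y f_def by simp
    have "j = j'"
      apply (rule key_inj1[of j p j' r t])
      using xy tt unfolding x y f_def vars_def by auto
    then show "x = y" using x y tt by simp
  qed
  moreover have "f ` vars p \<subseteq> vars p" using assms(1) unfolding f_def vars_def by auto
  ultimately have b: "bij_betw f (vars p) (vars p)" by (simp add: endo_bij)
  have "{x\<in>vars p. adj p c x} = {x\<in>vars p. snd (f x) = i}"
    using assms(2) unfolding adj_def f_def c by auto
  also have "card \<dots> = card {y\<in>vars p. snd y = i}" using b by (rule card_pre)
  also have "{y\<in>vars p. snd y = i} = {..<p} \<times> {i}" using assms(2) unfolding c vars_def checks_def by auto
  finally show ?thesis by simp
qed

lemma common_card:
  assumes "prime p" "p \<ge> 3" "c \<in> checks p" "c' \<in> checks p" "c \<noteq> c'"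
  shows "card {x\<in>vars p. adj p c x \<and> adj p c' x} = (if fst c \<noteq> fst c' then 1 else 0)"
proof -
  obtain r i where c: "c = (r,i)" by force
  obtain r' i' where c': "c' = (r',i')" by force
  show ?thesis
  proof (cases "r = r'")
    case True
    then have "{x\<in>vars p. adj p c x \<and> adj p c' x} = {}"
      using assms(5) unfolding c c' adj_def by auto
    then show ?thesis using True c c' by simp
  next
    case False
    define f where "f = (\<lambda>x::nat\<times>nat. ((snd x + r * fst x) mod p, (snd x + r' * fst x) mod p))"
    have rr: "r < 3" "r' < 3" using assms(3,4) unfolding c c' checks_def by auto
    have "inj_on f (vars p)"
    proof (rule inj_onI)
      fix x y assume xy: "x \<in> vars p" "y \<in> vars p" "f x = f y"
      obtain t j where x: "x = (t,j)" by force
      obtain t' j' where y: "y = (t',j')" by force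
      have "t = t' \<and> j = j'"
        apply (rule key_inj[OF assms(1,2) rr False])
        using xy unfolding x y f_def vars_def by auto
      then show "x = y" using x y by simp
    qed
    moreover have "f ` vars p \<subseteq> vars p" using assms(2) unfolding f_def vars_def by auto
    ultimately have b: "bij_betw f (vars p) (vars p)" by (simp add: endo_bij)
    have "{x\<in>vars p. adj p c x \<and> adj p c' x} = {x\<in>vars p. f x = (i,i')}"
      using assms(3,4) unfolding adj_def f_def c c' by auto
    also have "card \<dots> = card {y\<in>vars p. y = (i,i')}" using b by (rule card_pre)
    also have "{y\<in>vars p. y = (i,i')} = {(i,i')}" using assms(3,4) unfolding c c' vars_def checks_def by auto
    finally show ?thesis using False c c' by simp
  qed
qed


definition nb :: "nat \<Rightarrow> nat \<Rightarrow> nat \<times> nat \<Rightarrow> nat \<times> nat" where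
  "nb p r x = (r, (snd x + r * fst x) mod p)"

lemma ND_all:
  assumes "p > 0" "x \<in> vars p"
  shows "ND p (checks p) x = (\<lambda>r. nb p r x) ` {..<3}" "card (ND p (checks p) x) = 3"
proof -
  show e: "ND p (checks p) x = (\<lambda>r. nb p r x) ` {..<3}"
  proof
    show "ND p (checks p) x \<subseteq> (\<lambda>r. nb p r x) ` {..<3}"
    proof
      fix c assume c: "c \<in> ND p (checks p) x"
      then have "fst c < 3" "snd c = (snd x + fst c * fst x) mod p"
        unfolding ND_def adj_def checks_def by auto
      then have "c = nb p (fst c) x" "fst c \<in> {..<3}" unfolding nb_def by (simp_all add: prod_eq_iff)
      then show "c \<in> (\<lambda>r. nb p r x) ` {..<3}" by blast
    qed
  next
    show "(\<lambda>r. nb p r x) ` {..<3} \<subseteq> ND p (checks p) x"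
    proof
      fix c assume "c \<in> (\<lambda>r. nb p r x) ` {..<3}"
      then obtain r where r: "r < 3" "c = nb p r x" by blast
      have "(snd x + r * fst x) mod p < p" using assms(1) by simp
      then show "c \<in> ND p (checks p) x"
        using r assms(2) unfolding ND_def adj_def nb_def checks_def by simp
    qed
  qed
  have "inj_on (\<lambda>r. nb p r x) {..<3}" unfolding inj_on_def nb_def by simp
  then show "card (ND p (checks p) x) = 3" unfolding e by (simp add: card_image)
qed

lemma ND_mono: "A \<subseteq> B \<Longrightarrow> ND p A x \<subseteq> ND p B x" unfolding ND_def by auto

lemma k_le3:
  assumes "p > 0" "x \<in> vars p" "Cu \<subseteq> checks p"
  shows "card (ND p Cu x) \<le> 3"
proof -
  have "ND p Cu x \<subseteq> ND p (checks p) x" using assms(3) by (rule ND_mono)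
  moreover have "finite (ND p (checks p) x)" using ND_all[OF assms(1,2)] by simp
  ultimately have "card (ND p Cu x) \<le> card (ND p (checks p) x)" by (intro card_mono)
  then show ?thesis using ND_all(2)[OF assms(1,2)] by simp
qed


lemma CCS_sub: "CCS p Cu \<subseteq> vars p" unfolding CCS_def NV_def by auto

lemma CCS_iff:
  assumes "p > 0" "x \<in> vars p" "Cu \<subseteq> checks p"
  shows "x \<in> CCS p Cu \<longleftrightarrow> 0 < card (ND p Cu x) \<and> card (ND p Cu x) < 3"
proof -
  have sub: "ND p Cu x \<subseteq> ND p (checks p) x" using assms(3) by (rule ND_mono)
  have fin: "finite (ND p (checks p) x)" using ND_all[OF assms(1,2)] by simp
  have finC: "finite (ND p Cu x)" using sub fin finite_subset by blast
  have c3: "card (ND p (checks p) x) = 3" using ND_all[OF assms(1,2)] by simp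
  have nv: "x \<in> NV p Cu \<longleftrightarrow> ND p Cu x \<noteq> {}" using assms(2) unfolding NV_def ND_def by auto
  have dd: "ND p (checks p - Cu) x = ND p (checks p) x - ND p Cu x" unfolding ND_def by auto
  have "ND p (checks p - Cu) x \<noteq> {} \<longleftrightarrow> card (ND p Cu x) < 3"
  proof
    assume "ND p (checks p - Cu) x \<noteq> {}"
    then have "ND p Cu x \<subset> ND p (checks p) x" using sub dd by auto
    then show "card (ND p Cu x) < 3" using psubset_card_mono[OF fin] c3 by metis
  next
    assume "card (ND p Cu x) < 3"
    then have "ND p Cu x \<noteq> ND p (checks p) x" using c3 by auto
    then show "ND p (checks p - Cu) x \<noteq> {}" using sub dd by auto
  qed
  moreover have "ND p Cu x \<noteq> {} \<longleftrightarrow> 0 < card (ND p Cu x)" using finC by auto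
  ultimately show ?thesis unfolding CCS_def using nv by auto
qed

lemma pointwise:
  fixes k :: nat assumes "k \<le> 3"
  shows "2 * of_bool (0 < k \<and> k < 3) + k * (k - 1) = 2 * k"
proof -
  have "k = 0 \<or> k = 1 \<or> k = 2 \<or> k = 3" using assms by auto
  then show ?thesis by auto
qed

lemma count_W:
  assumes "p > 0" "Cu \<subseteq> checks p"
  shows "2 * card (CCS p Cu) + (\<Sum>x\<in>vars p. card (ND p Cu x) * (card (ND p Cu x) - 1))
        = 2 * (\<Sum>x\<in>vars p. card (ND p Cu x))"
proof -
  have "card (CCS p Cu) = (\<Sum>x\<in>vars p. of_bool (x \<in> CCS p Cu))"
  proof -
    have "vars p \<inter> {x. x \<in> CCS p Cu} = CCS p Cu" using CCS_sub[of p Cu] by auto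
    then show ?thesis by simp
  qed
  also have "\<dots> = (\<Sum>x\<in>vars p. of_bool (0 < card (ND p Cu x) \<and> card (ND p Cu x) < 3))"
    using CCS_iff[OF assms(1) _ assms(2)] by (intro sum.cong) auto
  finally have "2 * card (CCS p Cu) + (\<Sum>x\<in>vars p. card (ND p Cu x) * (card (ND p Cu x) - 1))
     = (\<Sum>x\<in>vars p. 2 * of_bool (0 < card (ND p Cu x) \<and> card (ND p Cu x) < 3) + card (ND p Cu x) * (card (ND p Cu x) - 1))"
    by (simp add: sum.distrib sum_distrib_left)
  also have "\<dots> = (\<Sum>x\<in>vars p. 2 * card (ND p Cu x))"
    using pointwise k_le3[OF assms(1) _ assms(2)] by (intro sum.cong) auto
  finally show ?thesis by (simp add: sum_distrib_left)
qed


lemma pairs_count: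
  fixes D :: "'a set"
  assumes "finite D"
  shows "(\<Sum>c\<in>D. \<Sum>c'\<in>D. (of_bool (c \<noteq> c' \<and> P c \<and> P c') :: nat))
       = card {c\<in>D. P c} * (card {c\<in>D. P c} - 1)"
proof -
  let ?A = "{c\<in>D. P c}"
  have finA: "finite ?A" using assms by simp
  have "(\<Sum>c'\<in>D. (of_bool (c \<noteq> c' \<and> P c \<and> P c') :: nat)) = (if c \<in> ?A then card ?A - 1 else 0)"
    if "c \<in> D" for c
  proof (cases "P c")
    case True
    have "D \<inter> {c'. c \<noteq> c' \<and> P c \<and> P c'} = ?A - {c}" using True by auto
    moreover have "card (?A - {c}) = card ?A - 1" using finA that True by simp
    ultimately show ?thesis using assms True that by simp
  next
    case False
    then show ?thesis by simp
  qed
  then have "(\<Sum>c\<in>D. \<Sum>c'\<in>D. (of_bool (c \<noteq> c' \<and> P c \<and> P c') :: nat))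
      = (\<Sum>c\<in>D. if c \<in> ?A then card ?A - 1 else 0)" by (intro sum.cong) auto
  also have "\<dots> = (\<Sum>c\<in>D. if P c then card ?A - 1 else 0)" by (intro sum.cong) auto
  also have "\<dots> = (\<Sum>c\<in>?A. card ?A - 1)" by (rule sum.inter_filter[OF assms, symmetric])
  also have "\<dots> = card ?A * (card ?A - 1)" by simp
  finally show ?thesis .
qed

lemma ND_eq: "Cu \<subseteq> checks p \<Longrightarrow> ND p Cu x = {c\<in>Cu. adj p c x}" unfolding ND_def by auto

lemma sum_k:
  assumes "prime p" "p \<ge> 3" "Cu \<subseteq> checks p"
  shows "(\<Sum>x\<in>vars p. card (ND p Cu x)) = card Cu * p"
proof -
  have finC: "finite Cu" using assms(3) finite_subset fin_checks by blast
  have "(\<Sum>x\<in>vars p. card (ND p Cu x)) = (\<Sum>x\<in>vars p. \<Sum>c\<in>Cu. (of_bool (adj p c x) :: nat))"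
  proof (intro sum.cong refl)
    fix x
    have "Cu \<inter> {c. adj p c x} = ND p Cu x" unfolding ND_def by auto
    then show "card (ND p Cu x) = (\<Sum>c\<in>Cu. (of_bool (adj p c x) :: nat))" using finC by simp
  qed
  also have "\<dots> = (\<Sum>c\<in>Cu. \<Sum>x\<in>vars p. (of_bool (adj p c x) :: nat))" by (rule sum.swap)
  also have "\<dots> = (\<Sum>c\<in>Cu. p)"
  proof (intro sum.cong refl)
    fix c assume c: "c \<in> Cu"
    have "vars p \<inter> {x. adj p c x} = {x\<in>vars p. adj p c x}" by auto
    moreover have "card {x\<in>vars p. adj p c x} = p" using assms(2) c assms(3) by (intro nbrs_card) auto
    ultimately show "(\<Sum>x\<in>vars p. (of_bool (adj p c x) :: nat)) = p" by simp
  qed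
  finally show ?thesis by simp
qed

lemma sum_kk:
  assumes "prime p" "p \<ge> 3" "Cu \<subseteq> checks p"
  shows "(\<Sum>x\<in>vars p. card (ND p Cu x) * (card (ND p Cu x) - 1))
     = (\<Sum>c\<in>Cu. card {c'\<in>Cu. fst c' \<noteq> fst c})"
proof -
  have finC: "finite Cu" using assms(3) finite_subset fin_checks by blast
  have "(\<Sum>x\<in>vars p. card (ND p Cu x) * (card (ND p Cu x) - 1))
     = (\<Sum>x\<in>vars p. \<Sum>c\<in>Cu. \<Sum>c'\<in>Cu. (of_bool (c \<noteq> c' \<and> adj p c x \<and> adj p c' x) :: nat))"
    using pairs_count[OF finC, of "\<lambda>c. adj p c _"] ND_eq[OF assms(3)] by (intro sum.cong refl) simp
  also have "\<dots> = (\<Sum>c\<in>Cu. \<Sum>x\<in>vars p. \<Sum>c'\<in>Cu. (of_bool (c \<noteq> c' \<and> adj p c x \<and> adj p c' x) :: nat))"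
    by (rule sum.swap)
  also have "\<dots> = (\<Sum>c\<in>Cu. \<Sum>c'\<in>Cu. \<Sum>x\<in>vars p. (of_bool (c \<noteq> c' \<and> adj p c x \<and> adj p c' x) :: nat))"
    by (intro sum.cong refl sum.swap)
  also have "\<dots> = (\<Sum>c\<in>Cu. \<Sum>c'\<in>Cu. (of_bool (fst c' \<noteq> fst c) :: nat))"
  proof (intro sum.cong refl)
    fix c c' assume cc: "c \<in> Cu" "c' \<in> Cu"
    show "(\<Sum>x\<in>vars p. (of_bool (c \<noteq> c' \<and> adj p c x \<and> adj p c' x) :: nat)) = of_bool (fst c' \<noteq> fst c)"
    proof (cases "c = c'")
      case True then show ?thesis by simp
    next
      case False
      have "vars p \<inter> {x. c \<noteq> c' \<and> adj p c x \<and> adj p c' x} = {x\<in>vars p. adj p c x \<and> adj p c' x}"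
        using False by auto
      moreover have "card {x\<in>vars p. adj p c x \<and> adj p c' x} = (if fst c \<noteq> fst c' then 1 else 0)"
        using cc assms False by (intro common_card) auto
      ultimately show ?thesis by auto
    qed
  qed
  also have "\<dots> = (\<Sum>c\<in>Cu. card {c'\<in>Cu. fst c' \<noteq> fst c})"
  proof (intro sum.cong refl)
    fix c
    have "Cu \<inter> {c'. fst c' \<noteq> fst c} = {c'\<in>Cu. fst c' \<noteq> fst c}" by auto
    then show "(\<Sum>c'\<in>Cu. (of_bool (fst c' \<noteq> fst c) :: nat)) = card {c'\<in>Cu. fst c' \<noteq> fst c}"
      using finC by simp
  qed
  finally show ?thesis .
qed

lemma W_eq:
  assumes "prime p" "p \<ge> 3" "Cu \<subseteq> checks p"
  shows "2 * card (CCS p Cu) + (\<Sum>c\<in>Cu. card {c'\<in>Cu. fst c' \<noteq> fst c}) = 2 * (card Cu * p)"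
  using count_W[of p Cu] sum_k[OF assms] sum_kk[OF assms] assms by simp


lemma cyc_fst:
  assumes "cycle6 p c c2 c3"
  shows "fst c2 \<noteq> fst c \<and> fst c3 \<noteq> fst c \<and> c2 \<noteq> c3"
proof -
  obtain v1 v3 where v: "adj p c v1" "adj p c2 v1" "adj p c3 v3" "adj p c v3"
    and d: "c \<noteq> c2" "c2 \<noteq> c3" "c \<noteq> c3"
    using assms unfolding cycle6_def by blast
  have "fst c2 \<noteq> fst c"
  proof
    assume h: "fst c2 = fst c"
    then have "snd c2 = snd c" using v(1,2) unfolding adj_def by simp
    with h d(1) show False by (simp add: prod_eq_iff)
  qed
  moreover have "fst c3 \<noteq> fst c"
  proof
    assume h: "fst c3 = fst c"
    then have "snd c3 = snd c" using v(3,4) unfolding adj_def by simp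
    with h d(3) show False by (simp add: prod_eq_iff)
  qed
  ultimately show ?thesis using d(2) by simp
qed

theorem theorem2:
  fixes p z :: nat and Cu :: "(nat \<times> nat) set"
  assumes "prime p" and "p \<ge> 3"
    and "Cu \<subseteq> checks p" and "card Cu = z" and "1 \<le> z" and "z \<le> p"
  shows "real (card (CCS p Cu)) \<ge> ((1 + 2 * real p) * real z - (real z)^2) / 4
    \<and> ((\<exists>r. \<forall>c \<in> Cu. fst c = r) \<longrightarrow> card (CCS p Cu) = z * p)
    \<and> (3 \<le> z \<and> z < p \<and> (\<forall>c \<in> Cu. \<exists>c2 \<in> Cu. \<exists>c3 \<in> Cu. cycle6 p c c2 c3)
           \<longrightarrow> card (CCS p Cu) \<le> z * p - z)"
proof -
  have finC: "finite Cu" using assms(3) finite_subset fin_checks by blast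
  define Q where "Q = (\<Sum>c\<in>Cu. card {c'\<in>Cu. fst c' \<noteq> fst c})"
  have W: "2 * card (CCS p Cu) + Q = 2 * (z * p)"
    using W_eq[OF assms(1-3)] assms(4) unfolding Q_def by simp
  have b: "card (CCS p Cu) = z * p" if "\<exists>r. \<forall>c \<in> Cu. fst c = r"
  proof -
    from that obtain r where r: "\<forall>c\<in>Cu. fst c = r" by blast
    have "Q = 0" unfolding Q_def using r finC by auto
    with W show ?thesis by simp
  qed
  have c: "card (CCS p Cu) \<le> z * p - z" if "\<forall>c \<in> Cu. \<exists>c2 \<in> Cu. \<exists>c3 \<in> Cu. cycle6 p c c2 c3"
  proof -
    have "2 \<le> card {c'\<in>Cu. fst c' \<noteq> fst c}" if cC: "c \<in> Cu" for c
    proof -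
      obtain c2 c3 where cc: "c2 \<in> Cu" "c3 \<in> Cu" "cycle6 p c c2 c3" using \<open>\<forall>c \<in> Cu. _\<close> cC by blast
      have f: "fst c2 \<noteq> fst c \<and> fst c3 \<noteq> fst c \<and> c2 \<noteq> c3" using cyc_fst[OF cc(3)] .
      have "{c2, c3} \<subseteq> {c'\<in>Cu. fst c' \<noteq> fst c}" using cc f by auto
      then have "card {c2, c3} \<le> card {c'\<in>Cu. fst c' \<noteq> fst c}" using finC by (intro card_mono) auto
      then show ?thesis using f by simp
    qed
    then have "(\<Sum>c\<in>Cu. (2::nat)) \<le> Q" unfolding Q_def by (intro sum_mono) auto
    then have "2 * z \<le> Q" using assms(4) by simp
    with W show ?thesis by (simp add: diff_mult_distrib)
  qed
  define zr where "zr = (\<lambda>r. card {c\<in>Cu. fst c = r})"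
  have fstlt: "fst ` Cu \<subseteq> {..<3}" using assms(3) unfolding checks_def by auto
  have zsum: "z = (\<Sum>r\<in>{..<3}. zr r)"
  proof -
    have "(\<Sum>r\<in>{..<3}. \<Sum>c\<in>{c\<in>Cu. fst c = r}. (1::nat)) = (\<Sum>c\<in>Cu. 1)"
      by (rule sum.group[OF finC _ fstlt]) simp
    then show ?thesis using assms(4) unfolding zr_def by simp
  qed
  have ssum: "(\<Sum>c\<in>Cu. zr (fst c)) = (\<Sum>r\<in>{..<3}. zr r * zr r)"
  proof -
    have "(\<Sum>r\<in>{..<3}. \<Sum>c\<in>{c\<in>Cu. fst c = r}. zr (fst c)) = (\<Sum>c\<in>Cu. zr (fst c))"
      by (rule sum.group[OF finC _ fstlt]) simp
    moreover have h: "(\<Sum>c\<in>{c\<in>Cu. fst c = r}. zr (fst c)) = zr r * zr r" for r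
    proof -
      have "(\<Sum>c\<in>{c\<in>Cu. fst c = r}. zr (fst c)) = (\<Sum>c\<in>{c\<in>Cu. fst c = r}. zr r)"
        by (intro sum.cong) auto
      also have "\<dots> = card {c\<in>Cu. fst c = r} * zr r" by simp
      also have "card {c\<in>Cu. fst c = r} = zr r" by (simp add: zr_def)
      finally show ?thesis .
    qed
    ultimately have "(\<Sum>c\<in>Cu. zr (fst c)) = (\<Sum>r\<in>{..<3}. \<Sum>c\<in>{c\<in>Cu. fst c = r}. zr (fst c))"
      by (simp only:)
    also have "\<dots> = (\<Sum>r\<in>{..<3}. zr r * zr r)"
      by (intro sum.cong refl) (rule h)
    finally show ?thesis .
  qed
  have Qr: "real Q = (\<Sum>c\<in>Cu. real z - real (zr (fst c)))"
    unfolding Q_def of_nat_sum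
  proof (intro sum.cong refl)
    fix c assume "c \<in> Cu"
    have "{c'\<in>Cu. fst c' \<noteq> fst c} = Cu - {c'\<in>Cu. fst c' = fst c}" by auto
    moreover have "card (Cu - {c'\<in>Cu. fst c' = fst c}) = card Cu - card {c'\<in>Cu. fst c' = fst c}"
      using finC by (intro card_Diff_subset) auto
    moreover have "card {c'\<in>Cu. fst c' = fst c} \<le> card Cu" using finC by (intro card_mono) auto
    ultimately show "real (card {c'\<in>Cu. fst c' \<noteq> fst c}) = real z - real (zr (fst c))"
      using assms(4) unfolding zr_def by (simp add: of_nat_diff)
  qed
  have three: "{..<3::nat} = {0,1,2}" by auto
  define a where "a = real (zr 0)"
  define bb where "bb = real (zr 1)"
  define cc where "cc = real (zr 2)"
  have zr3: "real z = a + bb + cc" using zsum unfolding three a_def bb_def cc_def by simp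
  have S3: "real (\<Sum>c\<in>Cu. zr (fst c)) = a*a + bb*bb + cc*cc"
    unfolding ssum three a_def bb_def cc_def by simp
  have Qv: "real Q = real z * real z - (a*a + bb*bb + cc*cc)"
    using Qr S3 assms(4) by (simp add: sum_subtractf of_nat_sum)
  have Wr: "2 * real (card (CCS p Cu)) + real Q = 2 * real z * real p"
    using arg_cong[OF W, of real] by simp
  have sq: "3 * (a*a + bb*bb + cc*cc) \<ge> real z * real z"
  proof -
    have "3*(a*a + bb*bb + cc*cc) - (a+bb+cc)*(a+bb+cc) = (a-bb)^2 + (bb-cc)^2 + (a-cc)^2"
      by (simp add: power2_eq_square algebra_simps)
    moreover have "(a-bb)^2 + (bb-cc)^2 + (a-cc)^2 \<ge> 0" by simp
    ultimately show ?thesis unfolding zr3 by linarith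
  qed
  have zp: "real z * real p \<ge> real z * real z" using assms(6) by (intro mult_left_mono) auto
  have zz: "real z * real z \<ge> real z" using assms(5) by (simp add: mult_le_cancel_left1 less_le_not_le)
  have a: "real (card (CCS p Cu)) \<ge> ((1 + 2 * real p) * real z - (real z)^2) / 4"
    using Wr Qv sq zp zz by (simp add: power2_eq_square algebra_simps)
  show ?thesis using a b c by auto
qed

end
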